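(* Let $M=(C,A,B)$ with $C\in\mathbb{R}^{p\times n}$, $A\in\mathbb{R}^{n\times n}$, $B\in\mathbb{R}^{n\times m}$ and $\rho(A)<1$, and fix an integer $d>0$. Then $$\|\mathcal{H}_{d,\infty,\infty}\|_2\le\|\mathcal{H}_{0,\infty,\infty}-\bar{\mathcal{H}}_{0,d,d}\|_2\le\sqrt2\,\|\mathcal{H}_{d,\infty,\infty}\|_2\le\sqrt2\,\|\mathcal{T}_{d,\infty}\|_2 .$$
   Context: $\mathcal{H}_{k,a,b}$ is the block Hankel matrix whose $(i,j)$ block ($1\le i\le a$, $1\le j\le b$, with $a=b=\infty$ allowed) is $CA^{k+i+j-2}B$. $\mathcal{T}_{k,\infty}$ is the infinite block lower-triangular Toeplitz matrix with zero diagonal blocks and $(i,j)$ block $CA^{k+i-j-1}B$ for $i>j$. For a finite matrix $P$, $\bar P=\begin{bmatrix}P&0\\0&0\end{bmatrix}$ is its zero padding to a doubly infinite matrix. Norms of infinite matrices are operator norms on $\ell^2$. *)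

theory Defs
  imports "Jordan_Normal_Form.Spectral_Radius" "HOL-Library.Extended_Real"
begin

text \<open>Infinite real matrices are represented by their scalar entries
  (row index, column index), both 0-based.\<close>

definition blockmat :: "nat \<Rightarrow> nat \<Rightarrow> (nat \<Rightarrow> nat \<Rightarrow> real mat) \<Rightarrow> nat \<Rightarrow> nat \<Rightarrow> real" where
  "blockmat p m F i j =
     (if p = 0 \<or> m = 0 then 0 else F (i div p) (j div m) $$ (i mod p, j mod m))"

definition markov :: "real mat \<Rightarrow> real mat \<Rightarrow> real mat \<Rightarrow> nat \<Rightarrow> real mat" where
  "markov C A B k = C * (A ^\<^sub>m k) * B"

text \<open>H_{k,inf,inf}: block (i,j) (1-based) is C A^(k+i+j-2) B.\<close>
definition hankel_inf :: "real mat \<Rightarrow> real mat \<Rightarrow> real mat \<Rightarrow> nat \<Rightarrow> nat \<Rightarrow> nat \<Rightarrow> real" where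
  "hankel_inf C A B k =
     blockmat (dim_row C) (dim_col B) (\<lambda>bi bj. markov C A B (k + bi + bj))"

text \<open>Zero padding of the finite Hankel matrix H_{k,a,b} to a doubly infinite matrix.\<close>
definition hankel_pad :: "real mat \<Rightarrow> real mat \<Rightarrow> real mat \<Rightarrow> nat \<Rightarrow> nat \<Rightarrow> nat \<Rightarrow> nat \<Rightarrow> nat \<Rightarrow> real" where
  "hankel_pad C A B k a b =
     blockmat (dim_row C) (dim_col B)
       (\<lambda>bi bj. if bi < a \<and> bj < b then markov C A B (k + bi + bj)
                else 0\<^sub>m (dim_row C) (dim_col B))"

definition toeplitz_inf :: "real mat \<Rightarrow> real mat \<Rightarrow> real mat \<Rightarrow> nat \<Rightarrow> nat \<Rightarrow> nat \<Rightarrow> real" where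
  "toeplitz_inf C A B k =
     blockmat (dim_row C) (dim_col B)
       (\<lambda>bi bj. if bj < bi then markov C A B (k + bi - bj - 1)
                else 0\<^sub>m (dim_row C) (dim_col B))"

text \<open>Operator norm on l^2 of an infinite matrix (value in ereal; infinite if
  unbounded): supremum over finite sections and unit vectors.\<close>
definition l2_opnorm :: "(nat \<Rightarrow> nat \<Rightarrow> real) \<Rightarrow> ereal" where
  "l2_opnorm M = (SUP (N, K, x) \<in> {(N, K, x :: nat \<Rightarrow> real). (\<Sum>j<K. (x j)\<^sup>2) \<le> 1}.
      ereal (sqrt (\<Sum>i<N. (\<Sum>j<K. M i j * x j)\<^sup>2)))"

end

theory Submission imports Defs begin

lemma opnorm_ge:
  assumes "(\<Sum>j<K. (x j)\<^sup>2) \<le> 1"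
  shows "ereal (sqrt (\<Sum>i<N. (\<Sum>j<K. M i j * x j)\<^sup>2)) \<le> l2_opnorm M"
  unfolding l2_opnorm_def
  by (rule SUP_upper2[where i="(N,K,x)"]) (use assms in auto)

lemma opnorm_least:
  assumes "\<And>N K x. (\<Sum>j<K. (x j)\<^sup>2) \<le> 1 \<Longrightarrow> ereal (sqrt (\<Sum>i<N. (\<Sum>j<K. M i j * x j)\<^sup>2)) \<le> c"
  shows "l2_opnorm M \<le> c"
  unfolding l2_opnorm_def
  by (rule SUP_least) (use assms in auto)

lemma opnorm_nonneg: "0 \<le> l2_opnorm M"
  using opnorm_ge[where N=0 and K=0 and x="\<lambda>_. 0" and M=M] by (simp add: zero_ereal_def)

lemma opnorm_sec:
  assumes "l2_opnorm M = ereal h" "(\<Sum>j<K. (x j)\<^sup>2) \<le> 1"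
  shows "(\<Sum>i<N. (\<Sum>j<K. M i j * x j)\<^sup>2) \<le> h\<^sup>2"
proof -
  have "sqrt (\<Sum>i<N. (\<Sum>j<K. M i j * x j)\<^sup>2) \<le> h"
    using opnorm_ge[OF assms(2), where N=N and M=M] assms(1) by simp
  moreover have "0 \<le> (\<Sum>i<N. (\<Sum>j<K. M i j * x j)\<^sup>2)" by (simp add: sum_nonneg)
  ultimately show ?thesis
    by (metis real_sqrt_le_iff real_sqrt_pow2 power2_eq_square sqrt_le_D)
qed

lemma sum_split_add: "(\<Sum>i<(a::nat)+b. (f::nat\<Rightarrow>'a::comm_monoid_add) i) = (\<Sum>i<a. f i) + (\<Sum>i<b. f (i+a))"
  by (induction b) (simp_all add: add.commute add.left_commute add.assoc)

lemma opnorm_sub: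
  assumes "\<And>N K. \<exists>r c N' K'. inj_on r {..<N} \<and> r ` {..<N} \<subseteq> {..<N'} \<and>
              inj_on c {..<K} \<and> c ` {..<K} \<subseteq> {..<K'} \<and>
              (\<forall>i<N. \<forall>j<K. M i j = M' (r i) (c j))"
  shows "l2_opnorm M \<le> l2_opnorm M'"
proof (rule opnorm_least)
  fix N K and x :: "nat \<Rightarrow> real"
  assume x: "(\<Sum>j<K. (x j)\<^sup>2) \<le> 1"
  obtain r c N' K' where rc: "inj_on r {..<N} \<and> r ` {..<N} \<subseteq> {..<N'} \<and>
              inj_on c {..<K} \<and> c ` {..<K} \<subseteq> {..<K'} \<and>
              (\<forall>i<N. \<forall>j<K. M i j = M' (r i) (c j))"
    using assms[of N K] by (elim exE) (rule that)
  from rc have r: "inj_on r {..<N}" "r ` {..<N} \<subseteq> {..<N'}"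
    and c: "inj_on c {..<K}" "c ` {..<K} \<subseteq> {..<K'}"
    and e: "\<forall>i<N. \<forall>j<K. M i j = M' (r i) (c j)"
    by simp_all
  define x' where "x' j' = (if j' \<in> c ` {..<K} then x (inv_into {..<K} c j') else 0)" for j'
  have x'c: "x' (c j) = x j" if "j < K" for j
    using that c(1) by (simp add: x'_def)
  have sx: "(\<Sum>j'<K'. g j' * x' j') = (\<Sum>j<K. g (c j) * x j)" for g :: "nat \<Rightarrow> real"
  proof -
    have "(\<Sum>j'<K'. g j' * x' j') = (\<Sum>j'\<in>c ` {..<K}. g j' * x' j')"
      by (rule sum.mono_neutral_right[OF finite_lessThan c(2)]) (simp add: x'_def)
    also have "\<dots> = (\<Sum>j<K. g (c j) * x' (c j))"
      by (rule sum.reindex[OF c(1), unfolded comp_def])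
    also have "\<dots> = (\<Sum>j<K. g (c j) * x j)" by (simp add: x'c)
    finally show ?thesis .
  qed
  have x'n: "(\<Sum>j'<K'. (x' j')\<^sup>2) \<le> 1"
  proof -
    have "(\<Sum>j'<K'. (x' j')\<^sup>2) = (\<Sum>j'\<in>c ` {..<K}. (x' j')\<^sup>2)"
      by (rule sum.mono_neutral_right[OF finite_lessThan c(2)]) (simp add: x'_def)
    also have "\<dots> = (\<Sum>j<K. (x' (c j))\<^sup>2)"
      by (rule sum.reindex[OF c(1), unfolded comp_def])
    also have "\<dots> = (\<Sum>j<K. (x j)\<^sup>2)" by (simp add: x'c)
    finally show ?thesis using x by simp
  qed
  define S' where "S' i' = (\<Sum>j'<K'. M' i' j' * x' j')" for i'
  have "(\<Sum>i<N. (\<Sum>j<K. M i j * x j)\<^sup>2) = (\<Sum>i<N. (S' (r i))\<^sup>2)"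
    by (rule sum.cong[OF refl]) (simp add: S'_def sx e)
  also have "\<dots> = (\<Sum>i'\<in>r ` {..<N}. (S' i')\<^sup>2)"
    by (rule sum.reindex[OF r(1), unfolded comp_def, symmetric])
  also have "\<dots> \<le> (\<Sum>i'<N'. (S' i')\<^sup>2)"
    by (rule sum_mono2[OF finite_lessThan r(2)]) simp
  finally have "sqrt (\<Sum>i<N. (\<Sum>j<K. M i j * x j)\<^sup>2) \<le> sqrt (\<Sum>i'<N'. (S' i')\<^sup>2)" by simp
  then have "ereal (sqrt (\<Sum>i<N. (\<Sum>j<K. M i j * x j)\<^sup>2)) \<le> ereal (sqrt (\<Sum>i'<N'. (S' i')\<^sup>2))" by simp
  also have "\<dots> \<le> l2_opnorm M'"
    unfolding S'_def by (rule opnorm_ge[OF x'n])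
  finally show "ereal (sqrt (\<Sum>i<N. (\<Sum>j<K. M i j * x j)\<^sup>2)) \<le> l2_opnorm M'" .
qed


lemma sq_sum_nonneg: "0 \<le> (\<Sum>i\<in>I. (f i)\<^sup>2 :: real)"
  by (simp add: sum_nonneg)

theorem proposition13:
  fixes C A B :: "real mat" and p n m d :: nat
  assumes "C \<in> carrier_mat p n" and "A \<in> carrier_mat n n" and "B \<in> carrier_mat n m"
    and "spectral_radius (map_mat complex_of_real A) < 1"
    and "d > 0"
  shows "l2_opnorm (hankel_inf C A B d)
           \<le> l2_opnorm (\<lambda>i j. hankel_inf C A B 0 i j - hankel_pad C A B 0 d d i j)
       \<and> l2_opnorm (\<lambda>i j. hankel_inf C A B 0 i j - hankel_pad C A B 0 d d i j)
           \<le> ereal (sqrt 2) * l2_opnorm (hankel_inf C A B d)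
       \<and> ereal (sqrt 2) * l2_opnorm (hankel_inf C A B d)
           \<le> ereal (sqrt 2) * l2_opnorm (toeplitz_inf C A B d)"
proof -
  have pC: "dim_row C = p" using assms(1) by simp
  have mB: "dim_col B = m" using assms(3) by simp
  define H where "H = hankel_inf C A B d"
  define D where "D = (\<lambda>i j. hankel_inf C A B 0 i j - hankel_pad C A B 0 d d i j)"
  define T where "T = toeplitz_inf C A B d"
  define mk where "mk = markov C A B"
  have Hij: "H i j = (if p = 0 \<or> m = 0 then 0 else mk (d + i div p + j div m) $$ (i mod p, j mod m))" for i j
    by (simp add: H_def hankel_inf_def blockmat_def pC mB mk_def)
  have Dij: "D i j = (if p = 0 \<or> m = 0 then 0 else
      (if i div p < d \<and> j div m < d then 0 else mk (i div p + j div m) $$ (i mod p, j mod m)))" for i j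
  proof (cases "p = 0 \<or> m = 0")
    case True then show ?thesis by (simp add: D_def hankel_inf_def hankel_pad_def blockmat_def pC mB)
  next
    case False
    then have "i mod p < p" "j mod m < m" by simp_all
    with False show ?thesis
      by (simp add: D_def hankel_inf_def hankel_pad_def blockmat_def pC mB mk_def)
  qed
  have Tij: "T i j = (if p = 0 \<or> m = 0 then 0 else
      (if j div m < i div p then mk (d + i div p - j div m - 1) $$ (i mod p, j mod m) else 0))" for i j
  proof (cases "p = 0 \<or> m = 0")
    case True then show ?thesis by (simp add: T_def toeplitz_inf_def blockmat_def pC mB)
  next
    case False
    then have "i mod p < p" "j mod m < m" by simp_all
    with False show ?thesis
      by (simp add: T_def toeplitz_inf_def blockmat_def pC mB mk_def)
  qed
  have E1: "D (i + d * p) j = H i j" for i j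
  proof (cases "p = 0 \<or> m = 0")
    case True then show ?thesis by (simp add: Dij Hij)
  next
    case False
    then have "(i + d * p) div p = i div p + d" "(i + d * p) mod p = i mod p" by simp_all
    with False show ?thesis by (simp add: Dij Hij add.commute add.left_commute)
  qed
  have E2: "D i j = (if j < d * m then 0 else H i (j - d * m))" if i: "i < d * p" for i j
  proof (cases "p = 0 \<or> m = 0")
    case True then show ?thesis by (simp add: Dij Hij)
  next
    case False
    have id: "i div p < d" using i False by (simp add: less_mult_imp_div_less)
    show ?thesis
    proof (cases "j < d * m")
      case True
      then have "j div m < d" using False by (simp add: less_mult_imp_div_less)
      with id True False show ?thesis by (simp add: Dij)
    next
      case jf: False
      then obtain j' where j': "j = j' + d * m" by (metis add.commute le_add_diff_inverse not_less)
      have "j div m = j' div m + d" "j mod m = j' mod m" using False by (simp_all add: j')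
      with id jf False j' show ?thesis by (simp add: Dij Hij add.commute add.left_commute)
    qed
  qed
  have c1: "l2_opnorm H \<le> l2_opnorm D"
  proof (rule opnorm_sub)
    fix N K :: nat
    show "\<exists>r c N' K'. inj_on r {..<N} \<and> r ` {..<N} \<subseteq> {..<N'} \<and>
              inj_on c {..<K} \<and> c ` {..<K} \<subseteq> {..<K'} \<and>
              (\<forall>i<N. \<forall>j<K. H i j = D (r i) (c j))"
      by (rule exI[of _ "\<lambda>i. i + d * p"], rule exI[of _ "\<lambda>j. j"], rule exI[of _ "N + d * p"],
          rule exI[of _ K]) (auto simp: E1 inj_on_def)
  qed
  have c3: "l2_opnorm H \<le> l2_opnorm T"
  proof (rule opnorm_sub)
    fix N K :: nat
    define Kb where "Kb = K div m + 1"
    define c where "c j = (Kb - 1 - j div m) * m + j mod m" for j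
    have cinj: "inj_on c {..<K}"
    proof (cases "m = 0")
      case True then show ?thesis by (simp add: c_def inj_on_def)
    next
      case False
      show ?thesis
      proof (rule inj_onI)
        fix a b assume a: "a \<in> {..<K}" and b: "b \<in> {..<K}" and ab: "c a = c b"
        have "a div m \<le> K div m" "b div m \<le> K div m" using a b by (simp_all add: div_le_mono)
        have cm: "c a mod m = a mod m" "c b mod m = b mod m" using False by (simp_all add: c_def)
        have cd: "c a div m = Kb - 1 - a div m" "c b div m = Kb - 1 - b div m" using False
          by (simp_all add: c_def)
        have "a div m = b div m" using cd ab \<open>a div m \<le> K div m\<close> \<open>b div m \<le> K div m\<close>
          by (simp add: Kb_def)
        moreover have "a mod m = b mod m" using cm ab by simp
        ultimately show "a = b" by (metis div_mult_mod_eq)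
      qed
    qed
    have crange: "c ` {..<K} \<subseteq> {..<Kb * m + K}"
    proof
      fix y assume "y \<in> c ` {..<K}"
      then obtain j where j: "j < K" "y = c j" by auto
      have jd: "j div m \<le> K div m" using j by (simp add: div_le_mono)
      show "y \<in> {..<Kb * m + K}"
      proof (cases "m = 0")
        case True then show ?thesis using j by (simp add: c_def)
      next
        case False
        have "j mod m < m" using False by simp
        then have "y < (Kb - 1 - j div m) * m + m" using j by (simp add: c_def)
        also have "\<dots> = (Kb - j div m) * m" using jd by (simp add: Kb_def Suc_diff_le algebra_simps)
        also have "\<dots> \<le> Kb * m" by simp
        finally show ?thesis by simp
      qed
    qed
    have ceq: "H i j = T (i + Kb * p) (c j)" if j: "j < K" for i j
    proof (cases "p = 0 \<or> m = 0")
      case True then show ?thesis by (simp add: Hij Tij)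
    next
      case False
      have jd: "j div m \<le> K div m" using j by (simp add: div_le_mono)
      have "(i + Kb * p) div p = i div p + Kb" "(i + Kb * p) mod p = i mod p" using False by simp_all
      moreover have "c j div m = Kb - 1 - j div m" "c j mod m = j mod m" using False
        by (simp_all add: c_def)
      moreover have "Kb - 1 - j div m < i div p + Kb" by (simp add: Kb_def)
      moreover have "d + (i div p + Kb) - (Kb - 1 - j div m) - 1 = d + i div p + j div m"
        using jd by (simp add: Kb_def)
      ultimately show ?thesis using False by (simp add: Hij Tij add.assoc)
    qed
    show "\<exists>r c N' K'. inj_on r {..<N} \<and> r ` {..<N} \<subseteq> {..<N'} \<and>
              inj_on c {..<K} \<and> c ` {..<K} \<subseteq> {..<K'} \<and>
              (\<forall>i<N. \<forall>j<K. H i j = T (r i) (c j))"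
      by (rule exI[of _ "\<lambda>i. i + Kb * p"], rule exI[of _ c], rule exI[of _ "N + Kb * p"],
          rule exI[of _ "Kb * m + K"]) (use cinj crange ceq in \<open>auto simp: inj_on_def\<close>)
  qed
  have c2: "l2_opnorm D \<le> ereal (sqrt 2) * l2_opnorm H"
  proof (cases "l2_opnorm H")
    case PInf then show ?thesis by simp
  next
    case MInf then show ?thesis using opnorm_nonneg[of H] by simp
  next
    case (real h)
    have h0: "0 \<le> h" using opnorm_nonneg[of H] real by (simp add: zero_ereal_def)
    show ?thesis unfolding real
    proof (rule opnorm_least)
      fix N K and x :: "nat \<Rightarrow> real"
      assume x: "(\<Sum>j<K. (x j)\<^sup>2) \<le> 1"
      define f where "f i = (\<Sum>j<K. D i j * x j)" for i
      define x0 where "x0 j = (if j < K then x j else 0)" for j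
      define y where "y j = x0 (j + d * m)" for j
      have bot: "(\<Sum>i<N. (f (i + d * p))\<^sup>2) \<le> h\<^sup>2"
      proof -
        have "(\<Sum>i<N. (f (i + d * p))\<^sup>2) = (\<Sum>i<N. (\<Sum>j<K. H i j * x j)\<^sup>2)"
          by (simp add: f_def E1)
        also have "\<dots> \<le> h\<^sup>2" by (rule opnorm_sec[OF real x])
        finally show ?thesis .
      qed
      have x0s: "(\<Sum>j<d * m + K. (x0 j)\<^sup>2) = (\<Sum>j<K. (x j)\<^sup>2)"
      proof -
        have "(\<Sum>j<d * m + K. (x0 j)\<^sup>2) = (\<Sum>j<K. (x0 j)\<^sup>2)"
          by (rule sum.mono_neutral_right) (auto simp: x0_def)
        also have "\<dots> = (\<Sum>j<K. (x j)\<^sup>2)" by (rule sum.cong) (auto simp: x0_def)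
        finally show ?thesis .
      qed
      have yn: "(\<Sum>j<K. (y j)\<^sup>2) \<le> 1"
      proof -
        have "(\<Sum>j<K. (y j)\<^sup>2) \<le> (\<Sum>j<d * m. (x0 j)\<^sup>2) + (\<Sum>j<K. (y j)\<^sup>2)"
          using sq_sum_nonneg[of x0 "{..<d * m}"] by simp
        also have "\<dots> = (\<Sum>j<d * m + K. (x0 j)\<^sup>2)"
          by (simp add: sum_split_add y_def)
        finally show ?thesis using x0s x by simp
      qed
      have ftop: "f i = (\<Sum>j<K. H i j * y j)" if i: "i < d * p" for i
      proof -
        have "f i = (\<Sum>j<K. D i j * x0 j)" by (simp add: f_def x0_def)
        also have "\<dots> = (\<Sum>j<d * m + K. D i j * x0 j)"
          by (rule sum.mono_neutral_left) (auto simp: x0_def)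
        also have "\<dots> = (\<Sum>j<d * m. D i j * x0 j) + (\<Sum>j<K. D i (j + d * m) * x0 (j + d * m))"
          by (rule sum_split_add)
        also have "\<dots> = (\<Sum>j<K. H i j * y j)"
          using i by (simp add: E2 y_def)
        finally show ?thesis .
      qed
      have top: "(\<Sum>i<d * p. (f i)\<^sup>2) \<le> h\<^sup>2"
      proof -
        have "(\<Sum>i<d * p. (f i)\<^sup>2) = (\<Sum>i<d * p. (\<Sum>j<K. H i j * y j)\<^sup>2)"
          by (rule sum.cong) (simp_all add: ftop)
        also have "\<dots> \<le> h\<^sup>2" by (rule opnorm_sec[OF real yn])
        finally show ?thesis .
      qed
      have "(\<Sum>i<N. (f i)\<^sup>2) \<le> (\<Sum>i<d * p + N. (f i)\<^sup>2)"
        by (rule sum_mono2) auto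
      also have "\<dots> = (\<Sum>i<d * p. (f i)\<^sup>2) + (\<Sum>i<N. (f (i + d * p))\<^sup>2)"
        by (rule sum_split_add)
      also have "\<dots> \<le> 2 * h\<^sup>2" using top bot by simp
      finally have S: "(\<Sum>i<N. (f i)\<^sup>2) \<le> 2 * h\<^sup>2" .
      have "sqrt (\<Sum>i<N. (f i)\<^sup>2) \<le> sqrt (2 * h\<^sup>2)" using S by simp
      also have "\<dots> = sqrt 2 * h" using h0 by (simp add: real_sqrt_mult)
      finally have "sqrt (\<Sum>i<N. (f i)\<^sup>2) \<le> sqrt 2 * h" .
      then show "ereal (sqrt (\<Sum>i<N. (\<Sum>j<K. D i j * x j)\<^sup>2)) \<le> ereal (sqrt 2) * ereal h"
        by (simp add: f_def)
    qed
  qed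
  have c3': "ereal (sqrt 2) * l2_opnorm H \<le> ereal (sqrt 2) * l2_opnorm T"
    by (rule ereal_mult_left_mono[OF c3]) simp
  show ?thesis using c1 c2 c3' unfolding H_def D_def T_def by simp
qed

end
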